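(* Let $n\ge 2$ and let $-1=x_1<x_2<\cdots<x_n=1$ be real numbers. 1. For any labels $y_1,\ldots,y_n\in\mathbb{R}$, there exists $\mu\in\mathcal{M}(\mathbb{U},\mathbb{R})$ with $\operatorname{supp}(\mu)\subseteq F_{reg}$ which is optimal (attains the infimum) for the regression problem $$\inf_{\mu\in\mathcal{M}(\mathbb{U},\mathbb{R})}\int_{\mathbb{U}}|d\mu(u)| \quad\text{subject to}\quad f_\mu(x_i)=y_i\ \ \forall i\in[n].$$ 2. For any $k\ge 1$ and labels $y_1,\ldots,y_n\in[k]$, there exists $\nu\in\mathcal{M}(\mathbb{U},\mathbb{R}^k)$ with $\operatorname{supp}(\nu)\subseteq F_{class}$ which is optimal (attains the infimum) for the classification problem $$\inf_{\mu\in\mathcal{M}(\mathbb{U},\mathbb{R}^k)}\int_{\mathbb{U}}\|d\mu(u)\| \quad\text{subject to}\quad (e_{y_i}-e_l)^T f_\mu(x_i)\ge \mathbb{1}(y_i\neq l)\ \ \forall i\in[n],\ \forall l\in[k].$$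
   Context: $[n]=\{1,\ldots,n\}$; $e_j$ is the $j$-th canonical basis vector of $\mathbb{R}^k$; $\mathbb{1}(y_i\neq l)$ is $1$ if $y_i\neq l$ and $0$ otherwise. Let $\mathbb{U}=\{-1,1\}\times[-1,1]$. For $u=(s,c)\in\mathbb{U}$ and $x\in\mathbb{R}$ let $\phi_u(x)=(s(x-c))_+$, where $(t)_+=\max(t,0)$. $\mathcal{M}(\mathbb{U},\mathbb{R}^k)$ denotes the set of (finite) signed Radon measures on $\mathbb{U}$ with values in $\mathbb{R}^k$, and for such $\mu$, $f_\mu(x)=\int_{\mathbb{U}}\phi_u(x)\,d\mu(u)\in\mathbb{R}^k$. $\int_{\mathbb{U}}|d\mu(u)|$ is the total variation of a real measure and $\int_{\mathbb{U}}\|d\mu(u)\|$ is the total variation of a vector measure with respect to the Euclidean norm $\|\cdot\|$ on $\mathbb{R}^k$. Define $R_{reg}=\{x_1,x_n\}\cup\left\{x_i: 2\le i\le n-1,\ \frac{y_{i+1}-y_i}{x_{i+1}-x_i}\neq\frac{y_i-y_{i-1}}{x_i-x_{i-1}}\right\}$ (for real labels) and $F_{reg}=\{-1,1\}\times R_{reg}$. Define $R_{class}=\{x_1,x_n\}\cup\{x_i: 2\le i\le n-1,\ y_{i-1}\neq y_i \text{ or } y_{i+1}\neq y_i\}$ (for labels in $[k]$) and $F_{class}=\{-1,1\}\times R_{class}$. *)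

theory Defs
  imports "HOL-Analysis.Analysis"
begin

definition Ucal :: "(real \<times> real) set" where
  "Ucal = {-1, 1} \<times> {-1..1}"

definition phi :: "real \<times> real \<Rightarrow> real \<Rightarrow> real" where
  "phi u x = max (fst u * (x - snd u)) 0"

text \<open>A finite signed vector-valued (Radon) measure on U is represented as
  h \<cdot> rho: rho a finite nonnegative Borel measure on U and h an rho-integrable
  density with values in the target space. Every finite vector measure arises this way
  (Radon-Nikodym w.r.t. its total variation), and conversely.\<close>
definition vmeas :: "(real \<times> real) measure \<Rightarrow> (real \<times> real \<Rightarrow> 'v::{banach,second_countable_topology}) \<Rightarrow> bool" where
  "vmeas \<rho> h \<longleftrightarrow> space \<rho> = Ucal \<and> sets \<rho> = sets (restrict_space borel Ucal)
     \<and> finite_measure \<rho> \<and> integrable \<rho> h"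

definition vm_tv :: "(real \<times> real) measure \<Rightarrow> (real \<times> real \<Rightarrow> 'v::{banach,second_countable_topology}) \<Rightarrow> real" where
  "vm_tv \<rho> h = (\<integral>u. norm (h u) \<partial>\<rho>)"

definition vm_f :: "(real \<times> real) measure \<Rightarrow> (real \<times> real \<Rightarrow> 'v::{banach,second_countable_topology}) \<Rightarrow> real \<Rightarrow> 'v" where
  "vm_f \<rho> h x = (\<integral>u. phi u x *\<^sub>R h u \<partial>\<rho>)"

definition vm_support :: "(real \<times> real) measure \<Rightarrow> (real \<times> real \<Rightarrow> 'v::{banach,second_countable_topology}) \<Rightarrow> (real \<times> real) set" where
  "vm_support \<rho> h = {u \<in> Ucal. \<forall>e>0. (\<integral>\<^sup>+ v. ennreal (norm (h v)) * indicator (ball u e) v \<partial>\<rho>) > 0}"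

definition R_reg :: "nat \<Rightarrow> (nat \<Rightarrow> real) \<Rightarrow> (nat \<Rightarrow> real) \<Rightarrow> real set" where
  "R_reg n x y = {x 1, x n} \<union> {x i | i. 2 \<le> i \<and> i \<le> n - 1 \<and>
      (y (i+1) - y i) / (x (i+1) - x i) \<noteq> (y i - y (i-1)) / (x i - x (i-1))}"

definition F_reg :: "nat \<Rightarrow> (nat \<Rightarrow> real) \<Rightarrow> (nat \<Rightarrow> real) \<Rightarrow> (real \<times> real) set" where
  "F_reg n x y = {-1, 1} \<times> R_reg n x y"

definition R_class :: "nat \<Rightarrow> (nat \<Rightarrow> real) \<Rightarrow> (nat \<Rightarrow> 'k) \<Rightarrow> real set" where
  "R_class n x y = {x 1, x n} \<union> {x i | i. 2 \<le> i \<and> i \<le> n - 1 \<and>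
      (y (i-1) \<noteq> y i \<or> y (i+1) \<noteq> y i)}"

definition F_class :: "nat \<Rightarrow> (nat \<Rightarrow> real) \<Rightarrow> (nat \<Rightarrow> 'k) \<Rightarrow> (real \<times> real) set" where
  "F_class n x y = {-1, 1} \<times> R_class n x y"

definition reg_feasible :: "nat \<Rightarrow> (nat \<Rightarrow> real) \<Rightarrow> (nat \<Rightarrow> real) \<Rightarrow> (real \<times> real) measure \<Rightarrow> (real \<times> real \<Rightarrow> real) \<Rightarrow> bool" where
  "reg_feasible n x y \<rho> h \<longleftrightarrow> vmeas \<rho> h \<and> (\<forall>i\<in>{1..n}. vm_f \<rho> h (x i) = y i)"

definition class_feasible :: "nat \<Rightarrow> (nat \<Rightarrow> real) \<Rightarrow> (nat \<Rightarrow> 'k::finite) \<Rightarrow> (real \<times> real) measure \<Rightarrow> (real \<times> real \<Rightarrow> real ^ 'k) \<Rightarrow> bool" where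
  "class_feasible n x y \<rho> h \<longleftrightarrow> vmeas \<rho> h \<and>
     (\<forall>i\<in>{1..n}. \<forall>l. (axis (y i) 1 - axis l 1) \<bullet> vm_f \<rho> h (x i) \<ge> (if y i \<noteq> l then 1 else 0))"

end

theory Submission
  imports Defs "HOL-Analysis.Analysis"
begin


lemma subseq_finite:
  fixes A :: "nat \<Rightarrow> 'a \<Rightarrow> 'v::{real_normed_vector,heine_borel}"
  assumes "finite F" and "\<And>k p. p \<in> F \<Longrightarrow> norm (A k p) \<le> M"
  shows "\<exists>r B. strict_mono r \<and> (\<forall>p\<in>F. (\<lambda>k. A (r k) p) \<longlonglongrightarrow> B p)"
  using assms
proof (induction F rule: finite_induct)
  case empty
  then show ?case by (auto intro: strict_mono_id)
next
  case (insert q F)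
  then obtain r B where r: "strict_mono r" and rB: "\<forall>p\<in>F. (\<lambda>k. A (r k) p) \<longlonglongrightarrow> B p"
    by auto
  have "bounded (range (\<lambda>k. A (r k) q))"
    using insert.prems by (auto simp: bounded_iff)
  then obtain l r' where r': "strict_mono r'" and l: "((\<lambda>k. A (r k) q) \<circ> r') \<longlonglongrightarrow> l"
    using bounded_imp_convergent_subsequence by blast
  have "\<forall>p\<in>insert q F. (\<lambda>k. A ((r \<circ> r') k) p) \<longlonglongrightarrow> (B(q:=l)) p"
  proof
    fix p assume "p \<in> insert q F"
    show "(\<lambda>k. A ((r \<circ> r') k) p) \<longlonglongrightarrow> (B(q:=l)) p"
    proof (cases "p = q")
      case True then show ?thesis using l by (simp add: comp_def)
    next
      case False
      then have "p \<in> F" using \<open>p \<in> insert q F\<close> by auto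
      then have "((\<lambda>k. A (r k) p) \<circ> r') \<longlonglongrightarrow> B p"
        using rB r' LIMSEQ_subseq_LIMSEQ by blast
      then show ?thesis using False by (simp add: comp_def)
    qed
  qed
  moreover have "strict_mono (r \<circ> r')" using r r' by (rule strict_mono_o)
  ultimately show ?case by blast
qed

lemma exists_min:
  fixes P :: "('a \<Rightarrow> 'v::{real_normed_vector,heine_borel}) \<Rightarrow> bool"
  assumes fin: "finite F" and ex: "\<exists>A. P A"
    and cl: "\<And>A B. (\<And>k. P (A k)) \<Longrightarrow> (\<forall>p\<in>F. (\<lambda>k. A k p) \<longlonglongrightarrow> B p) \<Longrightarrow> P B"
  shows "\<exists>B. P B \<and> (\<forall>A. P A \<longrightarrow> (\<Sum>p\<in>F. norm (B p)) \<le> (\<Sum>p\<in>F. norm (A p)))"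
proof -
  define J where "J = (\<lambda>A::'a \<Rightarrow> 'v. \<Sum>p\<in>F. norm (A p))"
  define S where "S = {J A | A. P A}"
  define m where "m = Inf S"
  have Sne: "S \<noteq> {}" using ex by (auto simp: S_def)
  have Sbdd: "bdd_below S" unfolding S_def J_def
    by (rule bdd_belowI[of _ 0]) (auto intro: sum_nonneg)
  have "\<forall>k::nat. \<exists>A. P A \<and> J A < m + 1 / (real k + 1)"
  proof
    fix k :: nat
    have "m < m + 1 / (real k + 1)" by simp
    then obtain s where "s \<in> S" "s < m + 1 / (real k + 1)"
      using cInf_lessD[OF Sne] m_def by blast
    then show "\<exists>A. P A \<and> J A < m + 1 / (real k + 1)" by (auto simp: S_def)
  qed
  then obtain A where A: "\<And>k. P (A k)" and AJ: "\<And>k. J (A k) < m + 1 / (real k + 1)"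
    by metis
  have mle: "\<And>A. P A \<Longrightarrow> m \<le> J A"
    unfolding m_def by (rule cInf_lower[OF _ Sbdd]) (auto simp: S_def)
  have bnd: "norm (A k p) \<le> m + 1" if "p \<in> F" for k p
  proof -
    have "norm (A k p) \<le> J (A k)" unfolding J_def
      using that fin by (intro member_le_sum) auto
    also have "\<dots> \<le> m + 1"
      using AJ[of k] by (smt (verit) divide_le_eq_1 of_nat_0_le_iff)
    finally show ?thesis .
  qed
  obtain r B where r: "strict_mono r" and rB: "\<forall>p\<in>F. (\<lambda>k. A (r k) p) \<longlonglongrightarrow> B p"
    using subseq_finite[of F A "m + 1", OF fin bnd] by blast
  have PB: "P B" using cl[of "\<lambda>k. A (r k)" B] A rB by blast
  have JB: "(\<lambda>k. J (A (r k))) \<longlonglongrightarrow> J B"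
    unfolding J_def using rB by (intro tendsto_sum tendsto_norm) auto
  have "(\<lambda>k. J (A k)) \<longlonglongrightarrow> m"
  proof (rule tendsto_sandwich[of "\<lambda>k. m" _ _ "\<lambda>k. m + 1 / (real k + 1)"])
    show "\<forall>\<^sub>F k in sequentially. m \<le> J (A k)" using mle A by auto
    show "\<forall>\<^sub>F k in sequentially. J (A k) \<le> m + 1 / (real k + 1)" by (intro always_eventually allI less_imp_le[OF AJ])
    show "(\<lambda>k. m) \<longlonglongrightarrow> m" by simp
    show "(\<lambda>k. m + 1 / (real k + 1)) \<longlonglongrightarrow> m"
      using tendsto_add[OF tendsto_const[of m] LIMSEQ_inverse_real_of_nat]
      by (simp add: inverse_eq_divide add.commute)
  qed
  then have "(\<lambda>k. J (A (r k))) \<longlonglongrightarrow> m"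
    using LIMSEQ_subseq_LIMSEQ[OF _ r] by (auto simp: comp_def)
  then have "J B = m" using JB LIMSEQ_unique by blast
  then show ?thesis using PB mle unfolding J_def by auto
qed



definition prd :: "real set \<Rightarrow> real \<Rightarrow> real" where
  "prd R g = (if \<exists>r\<in>R. r < g then Max {r\<in>R. r < g} else g - 1)"
definition suc :: "real set \<Rightarrow> real \<Rightarrow> real" where
  "suc R g = (if \<exists>r\<in>R. g < r then Min {r\<in>R. g < r} else g + 1)"
definition hat :: "real set \<Rightarrow> real \<Rightarrow> real \<Rightarrow> real" where
  "hat R g c = max 0 (min ((c - prd R g) / (g - prd R g)) ((suc R g - c) / (suc R g - g)))"

lemma prd_less: "finite R \<Longrightarrow> prd R g < g"
proof -
  assume fin: "finite R"
  show ?thesis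
  proof (cases "\<exists>r\<in>R. r < g")
    case True
    have "Max {r\<in>R. r < g} \<in> {r\<in>R. r < g}" by (rule Max_in) (use fin True in auto)
    then show ?thesis using True unfolding prd_def by auto
  qed (simp add: prd_def)
qed
lemma suc_gr: "finite R \<Longrightarrow> g < suc R g"
proof -
  assume fin: "finite R"
  show ?thesis
  proof (cases "\<exists>r\<in>R. g < r")
    case True
    have "Min {r\<in>R. g < r} \<in> {r\<in>R. g < r}" by (rule Min_in) (use fin True in auto)
    then show ?thesis using True unfolding suc_def by auto
  qed (simp add: suc_def)
qed
lemma prd_ge: "finite R \<Longrightarrow> r \<in> R \<Longrightarrow> r < g \<Longrightarrow> r \<le> prd R g"
  unfolding prd_def by (auto intro: Max_ge)
lemma suc_le: "finite R \<Longrightarrow> r \<in> R \<Longrightarrow> g < r \<Longrightarrow> suc R g \<le> r"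
  unfolding suc_def by (auto intro: Min_le)
lemma prd_eq: "finite R \<Longrightarrow> a \<in> R \<Longrightarrow> a < g \<Longrightarrow> (\<forall>r\<in>R. \<not>(a < r \<and> r < g)) \<Longrightarrow> prd R g = a"
  unfolding prd_def
  by (auto intro!: Max_eqI)
lemma suc_eq: "finite R \<Longrightarrow> b \<in> R \<Longrightarrow> g < b \<Longrightarrow> (\<forall>r\<in>R. \<not>(g < r \<and> r < b)) \<Longrightarrow> suc R g = b"
  unfolding suc_def
  by (auto intro!: Min_eqI)

lemma hat_nonneg: "0 \<le> hat R g c"
  unfolding hat_def by simp

lemma continuous_hat: "finite R \<Longrightarrow> continuous_on UNIV (hat R g)"
  using prd_less[of R g] suc_gr[of R g] unfolding hat_def by (intro continuous_intros) auto

lemma hat_self: "finite R \<Longrightarrow> hat R g g = 1"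
  using prd_less[of R g] suc_gr[of R g] unfolding hat_def by simp

lemma hat_zero_left: "finite R \<Longrightarrow> g \<in> R \<Longrightarrow> r \<in> R \<Longrightarrow> g < r \<Longrightarrow> r \<le> c \<Longrightarrow> hat R g c = 0"
  using suc_le[of R r g] suc_gr[of R g] unfolding hat_def
  by (auto simp: divide_le_0_iff intro!: max_absorb1 min.coboundedI2)

lemma hat_zero_right: "finite R \<Longrightarrow> g \<in> R \<Longrightarrow> r \<in> R \<Longrightarrow> r < g \<Longrightarrow> c \<le> r \<Longrightarrow> hat R g c = 0"
  using prd_ge[of R r g] prd_less[of R g] unfolding hat_def
  by (auto simp: divide_le_0_iff intro!: max_absorb1 min.coboundedI1)

lemma lin_interp_aux:
  fixes a b t g :: real
  assumes "a < b"
  shows "(b-t)/(b-a)*(a-g) + (t-a)/(b-a)*(b-g) = t - g"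
proof -
  have "(b-t)/(b-a)*(a-g) + (t-a)/(b-a)*(b-g) = ((b-t)*(a-g) + (t-a)*(b-g))/(b-a)"
    by (simp add: add_divide_distrib)
  also have "(b-t)*(a-g) + (t-a)*(b-g) = (t-g)*(b-a)" by (simp add: algebra_simps)
  finally show ?thesis using assms by simp
qed

lemma relu_affine:
  fixes s a b t g :: real
  assumes "s \<in> {-1,1}" "a < b" "a \<le> t" "t \<le> b" "\<not>(a < g \<and> g < b)"
  shows "max (s*(t-g)) 0 = ((b-t)/(b-a)) * max (s*(a-g)) 0 + ((t-a)/(b-a)) * max (s*(b-g)) 0"
proof -
  have ba: "b - a > 0" using assms by simp
  have "g \<le> a \<or> b \<le> g" using assms by auto
  moreover have "s = -1 \<or> s = 1" using assms by auto
  ultimately consider "g \<le> a" "s = -1" | "g \<le> a" "s = 1" | "b \<le> g" "s = -1" | "b \<le> g" "s = 1" by blast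
  then show ?thesis
  proof cases
    case 1
    then have e: "max (s*(t-g)) 0 = 0" "max (s*(a-g)) 0 = 0" "max (s*(b-g)) 0 = 0"
      using assms by auto
    show ?thesis unfolding e by simp
  next
    case 2
    then have e: "max (s*(t-g)) 0 = t - g" "max (s*(a-g)) 0 = a - g" "max (s*(b-g)) 0 = b - g"
      using assms by auto
    show ?thesis unfolding e using lin_interp_aux[OF assms(2)] by simp
  next
    case 3
    then have e: "max (s*(t-g)) 0 = g - t" "max (s*(a-g)) 0 = g - a" "max (s*(b-g)) 0 = g - b"
      using assms by auto
    have "(b-t)/(b-a)*(g-a) + (t-a)/(b-a)*(g-b) = -((b-t)/(b-a)*(a-g) + (t-a)/(b-a)*(b-g))"
    proof -
      have m: "g - a = -(a-g)" "g - b = -(b-g)" by simp_all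
      show ?thesis unfolding m by (simp only: mult_minus_right minus_add_distrib)
    qed
    then show ?thesis unfolding e using lin_interp_aux[OF assms(2), of t g] by simp
  next
    case 4
    then have e: "max (s*(t-g)) 0 = 0" "max (s*(a-g)) 0 = 0" "max (s*(b-g)) 0 = 0"
      using assms by auto
    show ?thesis unfolding e by simp
  qed
qed

lemma hat_interp:
  fixes \<psi> :: "real \<Rightarrow> 'v::real_vector"
  assumes fin: "finite R" and m1: "-1 \<in> R" and p1: "1 \<in> R" and c: "-1 \<le> c" "c \<le> 1"
    and aff: "\<And>a b t. a \<in> R \<Longrightarrow> b \<in> R \<Longrightarrow> a < b \<Longrightarrow> (\<forall>r\<in>R. \<not>(a < r \<and> r < b)) \<Longrightarrow>
        a \<le> t \<Longrightarrow> t \<le> b \<Longrightarrow> \<psi> t = ((b-t)/(b-a)) *\<^sub>R \<psi> a + ((t-a)/(b-a)) *\<^sub>R \<psi> b"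
  shows "(\<Sum>g\<in>R. hat R g c *\<^sub>R \<psi> g) = \<psi> c"
proof (cases "c \<in> R")
  case True
  have "(\<Sum>g\<in>R. hat R g c *\<^sub>R \<psi> g) = (\<Sum>g\<in>{c}. hat R g c *\<^sub>R \<psi> g)"
  proof (rule sum.mono_neutral_right)
    show "\<forall>g\<in>R - {c}. hat R g c *\<^sub>R \<psi> g = 0"
    proof
      fix g assume g: "g \<in> R - {c}"
      then have "g < c \<or> c < g" by auto
      then have "hat R g c = 0"
        using hat_zero_left[OF fin, of g c c] hat_zero_right[OF fin, of g c c] g True by auto
      then show "hat R g c *\<^sub>R \<psi> g = 0" by simp
    qed
  qed (use fin True in auto)
  then show ?thesis using hat_self[OF fin] by simp
next
  case False
  define a where "a = Max {r\<in>R. r \<le> c}"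
  define b where "b = Min {r\<in>R. c \<le> r}"
  have "a \<in> {r\<in>R. r \<le> c}" unfolding a_def by (rule Max_in) (use fin m1 c in auto)
  then have aR: "a \<in> R" "a \<le> c" by auto
  have "b \<in> {r\<in>R. c \<le> r}" unfolding b_def by (rule Min_in) (use fin p1 c in auto)
  then have bR: "b \<in> R" "c \<le> b" by auto
  have ac: "a < c" using aR False by (metis order_le_less)
  have cb: "c < b" using bR False by (metis order_le_less)
  have cons: "\<forall>r\<in>R. \<not>(a < r \<and> r < b)"
  proof (intro ballI notI)
    fix r assume r: "r \<in> R" "a < r \<and> r < b"
    show False
    proof (cases "r \<le> c")
      case True then have "r \<le> a" unfolding a_def using fin r by (auto intro: Max_ge)
      then show False using r by simp
    next
      case False then have "b \<le> r" unfolding b_def using fin r by (auto intro: Min_le)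
      then show False using r by simp
    qed
  qed
  have sa: "suc R a = b" using suc_eq[OF fin bR(1), of a] ac cb cons by auto
  have pb: "prd R b = a" using prd_eq[OF fin aR(1), of b] ac cb cons by auto
  have ha: "hat R a c = (b - c) / (b - a)"
  proof -
    have "(c - prd R a) / (a - prd R a) \<ge> 1" using prd_less[OF fin, of a] ac by simp
    moreover have "(b - c) / (b - a) \<le> 1" "(b - c) / (b - a) \<ge> 0" using ac cb by auto
    ultimately show ?thesis unfolding hat_def sa by simp
  qed
  have hb: "hat R b c = (c - a) / (b - a)"
  proof -
    have "(suc R b - c) / (suc R b - b) \<ge> 1" using suc_gr[OF fin, of b] cb by simp
    moreover have "(c - a) / (b - a) \<le> 1" "(c - a) / (b - a) \<ge> 0" using ac cb by auto
    ultimately show ?thesis unfolding hat_def pb by simp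
  qed
  have "(\<Sum>g\<in>R. hat R g c *\<^sub>R \<psi> g) = (\<Sum>g\<in>{a,b}. hat R g c *\<^sub>R \<psi> g)"
  proof (rule sum.mono_neutral_right)
    show "\<forall>g\<in>R - {a,b}. hat R g c *\<^sub>R \<psi> g = 0"
    proof
      fix g assume g: "g \<in> R - {a,b}"
      then have "g < a \<or> b < g" using cons by force
      then have "hat R g c = 0"
        using hat_zero_left[OF fin, of g a c] hat_zero_right[OF fin, of g b c] g aR bR ac cb by auto
      then show "hat R g c *\<^sub>R \<psi> g = 0" by simp
    qed
  qed (use fin aR bR in auto)
  also have "\<dots> = ((b-c)/(b-a)) *\<^sub>R \<psi> a + ((c-a)/(b-a)) *\<^sub>R \<psi> b"
    using ac cb ha hb by simp
  also have "\<dots> = \<psi> c"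
  proof -
    have ab: "a < b" using ac cb by simp
    show ?thesis by (rule aff[OF aR(1) bR(1) ab cons, of c, symmetric]) (use ac cb in auto)
  qed
  finally show ?thesis .
qed



definition dmeas :: "(real \<times> real) set \<Rightarrow> (real \<times> real) measure" where
  "dmeas F = distr (count_space F) (restrict_space borel Ucal) (\<lambda>u. u)"
definition dh :: "(real \<times> real) set \<Rightarrow> (real \<times> real \<Rightarrow> 'v::real_vector) \<Rightarrow> real \<times> real \<Rightarrow> 'v" where
  "dh F A = (\<lambda>u. if u \<in> F then A u else 0)"

lemma closed_Ucal: "closed Ucal"
  unfolding Ucal_def by (intro closed_Times) auto

lemma Ucal_sets: "Ucal \<in> sets borel"
  using closed_Ucal by (rule borel_closed)

lemma phi_meas_borel: "(\<lambda>u. phi u z) \<in> borel_measurable borel"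
  unfolding phi_def by (intro borel_measurable_continuous_onI continuous_intros)

lemma cont_meas: "continuous_on UNIV f \<Longrightarrow> f \<in> borel_measurable (restrict_space borel Ucal)"
  by (intro measurable_restrict_space1 borel_measurable_continuous_onI)

lemma id_meas: "F \<subseteq> Ucal \<Longrightarrow> (\<lambda>u. u) \<in> count_space F \<rightarrow>\<^sub>M restrict_space borel Ucal"
  by (auto simp: space_restrict_space)

lemma dh_meas:
  fixes A :: "real \<times> real \<Rightarrow> 'v::{banach,second_countable_topology}"
  assumes "finite F"
  shows "dh F A \<in> borel_measurable (restrict_space borel Ucal)"
proof -
  have eq: "dh F A = (\<lambda>u. \<Sum>p\<in>F. indicator {p} u *\<^sub>R A p)"
  proof
    fix u
    have "(\<Sum>p\<in>F. indicator {p} u *\<^sub>R A p) = (\<Sum>p\<in>F. if p = u then A u else 0)"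
      by (rule sum.cong) (auto simp: indicator_def)
    also have "\<dots> = dh F A u" using assms by (simp add: dh_def)
    finally show "dh F A u = (\<Sum>p\<in>F. indicator {p} u *\<^sub>R A p)" by simp
  qed
  have "dh F A \<in> borel_measurable borel"
    unfolding eq by (intro borel_measurable_sum borel_measurable_scaleR borel_measurable_indicator
        borel_closed) auto
  then show ?thesis by (rule measurable_restrict_space1)
qed

lemma dmeas_space: "space (dmeas F) = Ucal"
  unfolding dmeas_def by (simp add: space_restrict_space)

lemma dmeas_sets: "sets (dmeas F) = sets (restrict_space borel Ucal)"
  unfolding dmeas_def by simp

lemma dmeas_vmeas:
  fixes A :: "real \<times> real \<Rightarrow> 'v::{banach,second_countable_topology}"
  assumes fin: "finite F" and sub: "F \<subseteq> Ucal"
  shows "vmeas (dmeas F) (dh F A)"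
proof -
  interpret finite_measure "count_space F" using fin by (rule finite_measure_count_space)
  have fm: "finite_measure (dmeas F)" unfolding dmeas_def
    by (rule finite_measure_distr) (use id_meas[OF sub] in auto)
  have "integrable (dmeas F) (dh F A)" unfolding dmeas_def
    by (subst integrable_distr_eq[OF id_meas[OF sub] dh_meas[OF fin]])
       (simp add: integrable_count_space fin)
  then show ?thesis unfolding vmeas_def using fm dmeas_space dmeas_sets by auto
qed

lemma dmeas_f:
  fixes A :: "real \<times> real \<Rightarrow> 'v::{banach,second_countable_topology}"
  assumes fin: "finite F" and sub: "F \<subseteq> Ucal"
  shows "vm_f (dmeas F) (dh F A) z = (\<Sum>p\<in>F. phi p z *\<^sub>R A p)"
proof -
  have m: "(\<lambda>u. phi u z *\<^sub>R dh F A u) \<in> borel_measurable (restrict_space borel Ucal)"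
    by (intro borel_measurable_scaleR measurable_restrict_space1 phi_meas_borel dh_meas fin)
  have "vm_f (dmeas F) (dh F A) z = (\<integral>u. phi u z *\<^sub>R dh F A u \<partial>count_space F)"
    unfolding vm_f_def dmeas_def by (rule integral_distr[OF id_meas[OF sub] m])
  also have "\<dots> = (\<Sum>p\<in>F. phi p z *\<^sub>R dh F A p)"
    using fin by (rule lebesgue_integral_count_space_finite)
  also have "\<dots> = (\<Sum>p\<in>F. phi p z *\<^sub>R A p)"
    by (rule sum.cong) (auto simp: dh_def)
  finally show ?thesis .
qed

lemma dmeas_tv:
  fixes A :: "real \<times> real \<Rightarrow> 'v::{banach,second_countable_topology}"
  assumes fin: "finite F" and sub: "F \<subseteq> Ucal"
  shows "vm_tv (dmeas F) (dh F A) = (\<Sum>p\<in>F. norm (A p))"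
proof -
  have m: "(\<lambda>u. norm (dh F A u)) \<in> borel_measurable (restrict_space borel Ucal)"
    using dh_meas[OF fin, of A] by measurable
  have "vm_tv (dmeas F) (dh F A) = (\<integral>u. norm (dh F A u) \<partial>count_space F)"
    unfolding vm_tv_def dmeas_def by (rule integral_distr[OF id_meas[OF sub] m])
  also have "\<dots> = (\<Sum>p\<in>F. norm (dh F A p))"
    using fin by (rule lebesgue_integral_count_space_finite)
  also have "\<dots> = (\<Sum>p\<in>F. norm (A p))"
    by (rule sum.cong) (auto simp: dh_def)
  finally show ?thesis .
qed

lemma dmeas_support:
  fixes A :: "real \<times> real \<Rightarrow> 'v::{banach,second_countable_topology}"
  assumes fin: "finite F"
  shows "vm_support (dmeas F) (dh F A) \<subseteq> F"
proof
  fix u assume u: "u \<in> vm_support (dmeas F) (dh F A)"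
  show "u \<in> F"
  proof (rule ccontr)
    assume "u \<notin> F"
    have "open (- F)" using fin by (simp add: finite_imp_closed open_Compl)
    then obtain e where e: "e > 0" "ball u e \<subseteq> - F"
      using \<open>u \<notin> F\<close> open_contains_ball by blast
    have "(\<lambda>v. ennreal (norm (dh F A v)) * indicator (ball u e) v) = (\<lambda>v. 0)"
    proof
      fix v
      show "ennreal (norm (dh F A v)) * indicator (ball u e) v = 0"
      proof (cases "v \<in> ball u e")
        case True then have "v \<notin> F" using e by auto
        then show ?thesis by (simp add: dh_def)
      qed simp
    qed
    then have "(\<integral>\<^sup>+ v. ennreal (norm (dh F A v)) * indicator (ball u e) v \<partial>dmeas F) = 0"
      by simp
    then show False using u e unfolding vm_support_def by auto
  qed
qed



lemma sum_pair: "(\<Sum>p\<in>A \<times> B. f p) = (\<Sum>s\<in>A. \<Sum>g\<in>B. f (s, g))"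
  by (simp add: sum.cartesian_product)

lemma sum_pm1: "(\<Sum>s\<in>{-1, 1::real}. f s) = f (-1) + f 1"
  by simp

definition W :: "real set \<Rightarrow> real \<times> real \<Rightarrow> real \<times> real \<Rightarrow> real" where
  "W R p u = ((1 + fst p * fst u) / 2) * hat R (snd p) (snd u)"

lemma Ucal_mem: "u \<in> Ucal \<Longrightarrow> (fst u = -1 \<or> fst u = 1) \<and> -1 \<le> snd u \<and> snd u \<le> 1"
  unfolding Ucal_def by auto

lemma hat_sum1:
  assumes fin: "finite R" and "-1 \<in> R" "1 \<in> R" "-1 \<le> c" "c \<le> 1"
  shows "(\<Sum>g\<in>R. hat R g c) = 1"
proof -
  have "(\<Sum>g\<in>R. hat R g c *\<^sub>R (\<lambda>_. 1::real) g) = (\<lambda>_. 1::real) c"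
  proof (rule hat_interp[OF assms])
    fix a b t :: real assume "a < b"
    then have "(b - t) / (b - a) + (t - a) / (b - a) = (b - a) / (b - a)"
      by (simp add: add_divide_distrib[symmetric])
    then show "1 = ((b - t) / (b - a)) *\<^sub>R 1 + ((t - a) / (b - a)) *\<^sub>R (1::real)"
      using \<open>a < b\<close> by simp
  qed
  then show ?thesis by simp
qed

lemma hat_phi:
  assumes fin: "finite R" and "-1 \<in> R" "1 \<in> R" "-1 \<le> c" "c \<le> 1" and s: "s \<in> {-1,1}" and z: "z \<in> R"
  shows "(\<Sum>g\<in>R. hat R g c * phi (s, g) z) = phi (s, c) z"
proof -
  have "(\<Sum>g\<in>R. hat R g c *\<^sub>R (\<lambda>g. phi (s, g) z) g) = (\<lambda>g. phi (s, g) z) c"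
  proof (rule hat_interp[OF assms(1-5)])
    fix a b t assume ab: "a \<in> R" "b \<in> R" "a < b" "\<forall>r\<in>R. \<not> (a < r \<and> r < b)" "a \<le> t" "t \<le> b"
    have ms: "-s \<in> {-1,1}" using s by auto
    have nz: "\<not>(a < z \<and> z < b)" using ab z by auto
    have e: "\<And>t. phi (s, t) z = max ((-s)*(t - z)) 0" unfolding phi_def by (simp add: algebra_simps)
    show "phi (s, t) z = ((b - t) / (b - a)) *\<^sub>R phi (s, a) z + ((t - a) / (b - a)) *\<^sub>R phi (s, b) z"
      unfolding e using relu_affine[OF ms ab(3) ab(5) ab(6) nz] by simp
  qed
  then show ?thesis by simp
qed

lemma W_nonneg: "u \<in> Ucal \<Longrightarrow> p \<in> {-1,1} \<times> R \<Longrightarrow> 0 \<le> W R p u"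
  using Ucal_mem[of u] unfolding W_def by (auto intro!: mult_nonneg_nonneg hat_nonneg)

lemma sumW:
  assumes fin: "finite R" and "-1 \<in> R" "1 \<in> R" and u: "u \<in> Ucal"
  shows "(\<Sum>p\<in>{-1,1} \<times> R. W R p u) = 1"
proof -
  have c: "-1 \<le> snd u" "snd u \<le> 1" using Ucal_mem[OF u] by auto
  have "(\<Sum>p\<in>{-1,1} \<times> R. W R p u) = (\<Sum>s\<in>{-1,1}. (1 + s * fst u) / 2 * (\<Sum>g\<in>R. hat R g (snd u)))"
    unfolding sum_pair W_def by (simp add: sum_distrib_left)
  also have "\<dots> = (1 - fst u) / 2 + (1 + fst u) / 2" using hat_sum1[OF assms(1-3) c] by simp
  also have "\<dots> = 1" by (simp add: add_divide_distrib[symmetric])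
  finally show ?thesis .
qed

lemma W_le1:
  assumes fin: "finite R" and "-1 \<in> R" "1 \<in> R" and u: "u \<in> Ucal" and p: "p \<in> {-1,1} \<times> R"
  shows "W R p u \<le> 1"
proof -
  have "W R p u \<le> (\<Sum>p\<in>{-1,1} \<times> R. W R p u)"
    by (rule member_le_sum) (use fin p W_nonneg[OF u] in auto)
  then show ?thesis using sumW[OF assms(1-4)] by simp
qed

lemma sumPhiW:
  assumes fin: "finite R" and "-1 \<in> R" "1 \<in> R" and u: "u \<in> Ucal" and z: "z \<in> R"
  shows "(\<Sum>p\<in>{-1,1} \<times> R. phi p z * W R p u) = phi u z"
proof -
  have c: "-1 \<le> snd u" "snd u \<le> 1" using Ucal_mem[OF u] by auto
  have "(\<Sum>p\<in>{-1,1} \<times> R. phi p z * W R p u)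
      = (\<Sum>s\<in>{-1,1}. (1 + s * fst u) / 2 * (\<Sum>g\<in>R. hat R g (snd u) * phi (s, g) z))"
    unfolding sum_pair W_def by (simp add: sum_distrib_left algebra_simps)
  also have "\<dots> = (\<Sum>s\<in>{-1,1}. (1 + s * fst u) / 2 * phi (s, snd u) z)"
    by (rule sum.cong) (use hat_phi[OF assms(1-3) c _ z] in auto)
  also have "\<dots> = phi u z"
    using Ucal_mem[OF u] by (cases u) auto
  finally show ?thesis .
qed

lemma reduce:
  fixes h :: "real \<times> real \<Rightarrow> 'v::{banach,second_countable_topology}"
  assumes fin: "finite R" and m1: "-1 \<in> R" and p1: "1 \<in> R" and vm: "vmeas \<rho> h"
  shows "\<exists>A. (\<Sum>p\<in>{-1,1} \<times> R. norm (A p)) \<le> vm_tv \<rho> h \<and>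
             (\<forall>z\<in>R. (\<Sum>p\<in>{-1,1} \<times> R. phi p z *\<^sub>R A p) = vm_f \<rho> h z)"
proof -
  define F where "F = {-1,1::real} \<times> R"
  have finF: "finite F" unfolding F_def using fin by simp
  have sp: "space \<rho> = Ucal" and st: "sets \<rho> = sets (restrict_space borel Ucal)"
    and ih: "integrable \<rho> h" using vm unfolding vmeas_def by auto
  have bm: "\<And>f::real\<times>real\<Rightarrow>real. continuous_on UNIV f \<Longrightarrow> f \<in> borel_measurable \<rho>"
    using measurable_cong_sets[OF st refl] cont_meas by blast
  have Wm: "W R p \<in> borel_measurable \<rho>" for p
    by (rule bm) (unfold W_def, intro continuous_intros continuous_on_compose2[OF continuous_hat[OF fin]], auto)
  have phim: "(\<lambda>u. phi u z) \<in> borel_measurable \<rho>" for z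
    by (rule bm) (unfold phi_def, intro continuous_intros)
  have hm: "h \<in> borel_measurable \<rho>" using ih by auto
  have iW: "integrable \<rho> (\<lambda>u. W R p u *\<^sub>R h u)" if p: "p \<in> F" for p
  proof (rule Bochner_Integration.integrable_bound[OF ih])
    show "(\<lambda>u. W R p u *\<^sub>R h u) \<in> borel_measurable \<rho>" using Wm hm by (rule borel_measurable_scaleR)
    show "AE u in \<rho>. norm (W R p u *\<^sub>R h u) \<le> norm (h u)"
    proof (rule AE_I2)
      fix u assume "u \<in> space \<rho>"
      then have u: "u \<in> Ucal" using sp by simp
      have "0 \<le> W R p u" "W R p u \<le> 1"
        using W_nonneg[OF u] W_le1[OF fin m1 p1 u] p unfolding F_def by auto
      then show "norm (W R p u *\<^sub>R h u) \<le> norm (h u)"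
        by (simp add: mult_left_le_one_le)
    qed
  qed
  define A where "A = (\<lambda>p. \<integral>u. W R p u *\<^sub>R h u \<partial>\<rho>)"
  have inW: "integrable \<rho> (\<lambda>u. W R p u * norm (h u))" if "p \<in> F" for p
  proof -
    have "integrable \<rho> (\<lambda>u. norm (W R p u *\<^sub>R h u))" using iW[OF that] by (rule integrable_norm)
    moreover have "\<And>u. u \<in> space \<rho> \<Longrightarrow> norm (W R p u *\<^sub>R h u) = W R p u * norm (h u)"
      using W_nonneg that sp unfolding F_def by auto
    ultimately show ?thesis
      using Bochner_Integration.integrable_cong[OF refl, of \<rho> "\<lambda>u. norm (W R p u *\<^sub>R h u)" "\<lambda>u. W R p u * norm (h u)"]
      by blast
  qed
  have tv: "(\<Sum>p\<in>F. norm (A p)) \<le> vm_tv \<rho> h"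
  proof -
    have "(\<Sum>p\<in>F. norm (A p)) \<le> (\<Sum>p\<in>F. \<integral>u. W R p u * norm (h u) \<partial>\<rho>)"
    proof (rule sum_mono)
      fix p assume p: "p \<in> F"
      have "norm (A p) \<le> (\<integral>u. norm (W R p u *\<^sub>R h u) \<partial>\<rho>)" unfolding A_def by (rule Bochner_Integration.integral_norm_bound)
      also have "\<dots> = (\<integral>u. W R p u * norm (h u) \<partial>\<rho>)"
        by (rule Bochner_Integration.integral_cong[OF refl]) (use W_nonneg p sp in \<open>auto simp: F_def\<close>)
      finally show "norm (A p) \<le> (\<integral>u. W R p u * norm (h u) \<partial>\<rho>)" .
    qed
    also have "\<dots> = (\<integral>u. (\<Sum>p\<in>F. W R p u * norm (h u)) \<partial>\<rho>)"
      by (rule Bochner_Integration.integral_sum[symmetric]) (rule inW)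
    also have "\<dots> = (\<integral>u. norm (h u) \<partial>\<rho>)"
    proof (rule Bochner_Integration.integral_cong[OF refl])
      fix u assume "u \<in> space \<rho>"
      then have u: "u \<in> Ucal" using sp by simp
      show "(\<Sum>p\<in>F. W R p u * norm (h u)) = norm (h u)"
        using sumW[OF fin m1 p1 u] unfolding F_def by (simp add: sum_distrib_right[symmetric])
    qed
    finally show ?thesis unfolding vm_tv_def .
  qed
  have fv: "(\<Sum>p\<in>F. phi p z *\<^sub>R A p) = vm_f \<rho> h z" if z: "z \<in> R" for z
  proof -
    have "(\<Sum>p\<in>F. phi p z *\<^sub>R A p) = (\<Sum>p\<in>F. \<integral>u. (phi p z * W R p u) *\<^sub>R h u \<partial>\<rho>)"
      unfolding A_def by (rule sum.cong[OF refl]) (simp add: integral_scaleR_right[symmetric])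
    also have "\<dots> = (\<integral>u. (\<Sum>p\<in>F. (phi p z * W R p u) *\<^sub>R h u) \<partial>\<rho>)"
    proof (rule Bochner_Integration.integral_sum[symmetric])
      fix p assume p: "p \<in> F"
      have "integrable \<rho> (\<lambda>u. phi p z *\<^sub>R (W R p u *\<^sub>R h u))"
        using iW[OF p] by (rule integrable_scaleR_right)
      then show "integrable \<rho> (\<lambda>u. (phi p z * W R p u) *\<^sub>R h u)" by simp
    qed
    also have "\<dots> = (\<integral>u. phi u z *\<^sub>R h u \<partial>\<rho>)"
    proof (rule Bochner_Integration.integral_cong[OF refl])
      fix u assume "u \<in> space \<rho>"
      then have u: "u \<in> Ucal" using sp by simp
      show "(\<Sum>p\<in>F. (phi p z * W R p u) *\<^sub>R h u) = phi u z *\<^sub>R h u"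
        using sumPhiW[OF fin m1 p1 u z] unfolding F_def by (simp add: scaleR_sum_left[symmetric])
    qed
    finally show ?thesis unfolding vm_f_def .
  qed
  show ?thesis using tv fv unfolding F_def by blast
qed



lemma x_mono:
  fixes x :: "nat \<Rightarrow> real"
  assumes mono: "\<forall>i. 1 \<le> i \<and> i < n \<longrightarrow> x i < x (i + 1)"
  shows "1 \<le> i \<Longrightarrow> i < j \<Longrightarrow> j \<le> n \<Longrightarrow> x i < x j"
proof (induction j)
  case 0 then show ?case by simp
next
  case (Suc j)
  show ?case
  proof (cases "i = j")
    case True then show ?thesis using mono Suc.prems by auto
  next
    case False
    then have "x i < x j" using Suc by auto
    also have "x j < x (Suc j)" using mono Suc.prems False by auto
    finally show ?thesis .
  qed
qed

lemma x_le_iff: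
  fixes x :: "nat \<Rightarrow> real"
  assumes mono: "\<forall>i. 1 \<le> i \<and> i < n \<longrightarrow> x i < x (i + 1)"
    and "1 \<le> i" "i \<le> n" "1 \<le> j" "j \<le> n"
  shows "x i < x j \<longleftrightarrow> i < j"
  using x_mono[OF mono, of i j] x_mono[OF mono, of j i] assms
  by (metis linorder_neqE_nat order_less_asym order_less_irrefl)

lemma x_range:
  fixes x :: "nat \<Rightarrow> real"
  assumes mono: "\<forall>i. 1 \<le> i \<and> i < n \<longrightarrow> x i < x (i + 1)"
    and x1: "x 1 = -1" and xn: "x n = 1" and i: "1 \<le> i" "i \<le> n"
  shows "-1 \<le> x i \<and> x i \<le> 1"
  using x_mono[OF mono, of 1 i] x_mono[OF mono, of i n] x1 xn i
  by (cases "i = 1"; cases "i = n") force+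

lemma bracket:
  fixes x :: "nat \<Rightarrow> real"
  assumes mono: "\<forall>i. 1 \<le> i \<and> i < n \<longrightarrow> x i < x (i + 1)"
    and Rsub: "R \<subseteq> x ` {1..n}" and R1: "x 1 \<in> R" and Rn: "x n \<in> R"
    and i: "1 \<le> i" "i \<le> n" and xi: "x i \<notin> R"
  shows "\<exists>ia ib. 1 \<le> ia \<and> ia < i \<and> i < ib \<and> ib \<le> n \<and> x ia \<in> R \<and> x ib \<in> R \<and>
           (\<forall>j. ia < j \<and> j < ib \<longrightarrow> x j \<notin> R) \<and> (\<forall>r\<in>R. \<not>(x ia < r \<and> r < x ib))"
proof -
  define ia where "ia = Max {j \<in> {1..i}. x j \<in> R}"
  define ib where "ib = Min {j \<in> {i..n}. x j \<in> R}"
  have "ia \<in> {j \<in> {1..i}. x j \<in> R}" unfolding ia_def by (rule Max_in) (use R1 i in auto)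
  then have ia: "1 \<le> ia" "ia \<le> i" "x ia \<in> R" by auto
  have "ib \<in> {j \<in> {i..n}. x j \<in> R}" unfolding ib_def by (rule Min_in) (use Rn i in auto)
  then have ib: "i \<le> ib" "ib \<le> n" "x ib \<in> R" by auto
  have iai: "ia < i" using ia xi by (metis order_le_less)
  have iib: "i < ib" using ib xi by (metis order_le_less)
  have gap: "\<forall>j. ia < j \<and> j < ib \<longrightarrow> x j \<notin> R"
  proof (intro allI impI notI)
    fix j assume j: "ia < j \<and> j < ib" and xj: "x j \<in> R"
    show False
    proof (cases "j \<le> i")
      case True
      then have "j \<le> ia" unfolding ia_def using xj j ia by (intro Max_ge) auto
      then show False using j by simp
    next
      case False
      then have "ib \<le> j" unfolding ib_def using xj j ib by (intro Min_le) auto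
      then show False using j by simp
    qed
  qed
  have "\<forall>r\<in>R. \<not>(x ia < r \<and> r < x ib)"
  proof (intro ballI notI)
    fix r assume r: "r \<in> R" "x ia < r \<and> r < x ib"
    then have "r \<in> x ` {1..n}" using Rsub by auto
    then obtain j where j: "1 \<le> j" "j \<le> n" "r = x j" by auto
    have "ia < j" using r j x_le_iff[OF mono, of ia j] ia ib iai iib by auto
    moreover have "j < ib" using r j x_le_iff[OF mono, of j ib] ia ib iai iib by auto
    ultimately show False using gap r j by auto
  qed
  then show ?thesis using ia ib iai iib gap by blast
qed

lemma val_interp:
  fixes A :: "real \<times> real \<Rightarrow> 'v::real_vector"
  and R :: "real set"
  assumes ab: "a < b" "a \<le> t" "t \<le> b" and cons: "\<forall>r\<in>R. \<not>(a < r \<and> r < b)"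
  shows "(\<Sum>p\<in>{-1,1::real} \<times> R. phi p t *\<^sub>R A p) =
     ((b-t)/(b-a)) *\<^sub>R (\<Sum>p\<in>{-1,1::real} \<times> R. phi p a *\<^sub>R A p) + ((t-a)/(b-a)) *\<^sub>R (\<Sum>p\<in>{-1,1::real} \<times> R. phi p b *\<^sub>R A p)"
proof -
  have "(\<Sum>p\<in>{-1,1::real} \<times> R. phi p t *\<^sub>R A p) =
      (\<Sum>p\<in>{-1,1::real} \<times> R. ((b-t)/(b-a)) *\<^sub>R (phi p a *\<^sub>R A p) + ((t-a)/(b-a)) *\<^sub>R (phi p b *\<^sub>R A p))"
  proof (rule sum.cong[OF refl])
    fix p assume p: "p \<in> {-1,1::real} \<times> R"
    have "phi p t = ((b-t)/(b-a)) * phi p a + ((t-a)/(b-a)) * phi p b"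
      unfolding phi_def by (rule relu_affine) (use p ab cons in auto)
    then show "phi p t *\<^sub>R A p = ((b-t)/(b-a)) *\<^sub>R (phi p a *\<^sub>R A p) + ((t-a)/(b-a)) *\<^sub>R (phi p b *\<^sub>R A p)"
      by (simp add: scaleR_add_left)
  qed
  then show ?thesis by (simp add: sum.distrib scaleR_sum_right)
qed



lemma reg_affine:
  fixes x y :: "nat \<Rightarrow> real"
  assumes mono: "\<forall>i. 1 \<le> i \<and> i < n \<longrightarrow> x i < x (i + 1)"
    and ia: "1 \<le> ia" "ia < ib" "ib \<le> n"
    and gap: "\<forall>j. ia < j \<and> j < ib \<longrightarrow> x j \<notin> R_reg n x y"
    and i: "ia \<le> i" "i \<le> ib"
  shows "y i = ((x ib - x i)/(x ib - x ia)) * y ia + ((x i - x ia)/(x ib - x ia)) * y ib"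
proof -
  define \<sigma> where "\<sigma> = (y (ia+1) - y ia) / (x (ia+1) - x ia)"
  have slope: "ia + d < ib \<Longrightarrow> (y (ia+d+1) - y (ia+d)) / (x (ia+d+1) - x (ia+d)) = \<sigma>" for d
  proof (induction d)
    case 0 then show ?case by (simp add: \<sigma>_def)
  next
    case (Suc d)
    define j where "j = ia + d + 1"
    have j: "ia < j" "j < ib" using Suc.prems j_def by auto
    then have "x j \<notin> R_reg n x y" using gap by auto
    moreover have "2 \<le> j" "j \<le> n - 1" using j ia by auto
    ultimately have "(y (j+1) - y j) / (x (j+1) - x j) = (y j - y (j-1)) / (x j - x (j-1))"
      unfolding R_reg_def by blast
    moreover have "j - 1 = ia + d" using j_def by simp
    ultimately show ?case using Suc j_def by simp
  qed
  have lin: "ia + d \<le> ib \<Longrightarrow> y (ia+d) = y ia + \<sigma> * (x (ia+d) - x ia)" for d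
  proof (induction d)
    case 0 then show ?case by simp
  next
    case (Suc d)
    have pos: "x (ia+d+1) - x (ia+d) > 0" using mono Suc.prems ia by auto
    have "y (ia+d+1) - y (ia+d) = \<sigma> * (x (ia+d+1) - x (ia+d))"
      using slope[of d] Suc.prems pos by (simp add: divide_eq_eq)
    then show ?case using Suc by (simp add: algebra_simps)
  qed
  have yi: "y i = y ia + \<sigma> * (x i - x ia)" using lin[of "i - ia"] i by simp
  have yb: "y ib = y ia + \<sigma> * (x ib - x ia)" using lin[of "ib - ia"] ia by simp
  have D: "x ib - x ia > 0" using x_mono[OF mono, of ia ib] ia by simp
  have s1: "(x ib - x i)/(x ib - x ia) + (x i - x ia)/(x ib - x ia) = 1"
    using D by (simp add: add_divide_distrib[symmetric])
  define \<alpha> where "\<alpha> = (x ib - x i)/(x ib - x ia)"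
  define \<beta> where "\<beta> = (x i - x ia)/(x ib - x ia)"
  have "\<alpha> * y ia + \<beta> * y ib = (\<alpha> + \<beta>) * y ia + \<beta> * (x ib - x ia) * \<sigma>"
    unfolding yb by (simp add: algebra_simps)
  also have "\<beta> * (x ib - x ia) = x i - x ia" unfolding \<beta>_def using D by simp
  also have "\<alpha> + \<beta> = 1" using s1 unfolding \<alpha>_def \<beta>_def .
  finally show ?thesis using yi unfolding \<alpha>_def \<beta>_def by (simp add: algebra_simps)
qed

lemma class_const:
  fixes x :: "nat \<Rightarrow> real" and y :: "nat \<Rightarrow> 'k"
  assumes ia: "1 \<le> ia" "ia < i" "i < ib" "ib \<le> n"
    and gap: "\<forall>j. ia < j \<and> j < ib \<longrightarrow> x j \<notin> R_class n x y"
  shows "y i = y ia \<and> y ib = y ia"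
proof -
  have cond: "y (j-1) = y j \<and> y (j+1) = y j" if "ia < j" "j < ib" for j
  proof -
    have "x j \<notin> R_class n x y" using gap that by auto
    moreover have "2 \<le> j" "j \<le> n - 1" using that ia by auto
    ultimately show ?thesis unfolding R_class_def by blast
  qed
  have c: "ia + d + 1 < ib \<Longrightarrow> y (ia+d+1) = y ia \<and> y (ia+d+2) = y ia" for d
  proof (induction d)
    case 0 then show ?case using cond[of "ia+1"] by simp
  next
    case (Suc d)
    then have "y (ia+d+2) = y ia" by simp
    moreover have "y (ia+d+3) = y (ia+d+2)" using cond[of "ia+d+2"] Suc.prems by (simp add: numeral_eq_Suc)
    ultimately show ?case by (simp add: numeral_eq_Suc)
  qed
  have "y i = y ia" using c[of "i - ia - 1"] ia by simp
  moreover have "y ib = y ia"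
  proof -
    have e: "ia + (ib - ia - 2) + 1 < ib" "ia + (ib - ia - 2) + 2 = ib" using ia by auto
    show ?thesis using c[OF e(1)] unfolding e(2) by simp
  qed
  ultimately show ?thesis by simp
qed

lemma interp_exists:
  fixes x :: "nat \<Rightarrow> real" and v :: "nat \<Rightarrow> 'v::real_vector"
  assumes mono: "\<forall>i. 1 \<le> i \<and> i < n \<longrightarrow> x i < x (i + 1)"
    and x1: "x 1 = -1" and xn: "x n = 1" and n: "1 \<le> n"
  shows "\<exists>A. \<forall>i\<in>{1..n}. (\<Sum>p\<in>{-1,1::real} \<times> x ` {1..n}. phi p (x i) *\<^sub>R A p) = v i"
proof -
  define S where "S = {-1,1::real} \<times> x ` {1..n}"
  have finS: "finite S" unfolding S_def by simp
  have ex: "1 \<le> m \<Longrightarrow> m \<le> n \<Longrightarrow> \<exists>A. \<forall>i. 1 \<le> i \<and> i \<le> m \<longrightarrow> (\<Sum>p\<in>S. phi p (x i) *\<^sub>R A p) = v i" for m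
  proof (induction m)
    case 0 then show ?case by simp
  next
    case (Suc m)
    show ?case
    proof (cases "m = 0")
      case True
      define A :: "real \<times> real \<Rightarrow> 'v" where "A = (\<lambda>q. if q = (-1, 1) then (1/2) *\<^sub>R v 1 else 0)"
      have mem: "(-1, 1) \<in> S" unfolding S_def using xn n by force
      have "(\<Sum>p\<in>S. phi p (x 1) *\<^sub>R A p) = (\<Sum>p\<in>S. if p = (-1,1) then phi (-1,1) (x 1) *\<^sub>R ((1/2) *\<^sub>R v 1) else 0)"
        by (rule sum.cong) (auto simp: A_def)
      also have "\<dots> = phi (-1,1) (x 1) *\<^sub>R ((1/2) *\<^sub>R v 1)" using finS mem by simp
      also have "\<dots> = v 1" using x1 by (simp add: phi_def)
      finally show ?thesis using True by (intro exI[of _ A]) auto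
    next
      case False
      then obtain A where A: "\<forall>i. 1 \<le> i \<and> i \<le> m \<longrightarrow> (\<Sum>p\<in>S. phi p (x i) *\<^sub>R A p) = v i"
        using Suc by auto
      define p0 where "p0 = (1::real, x m)"
      have mem: "p0 \<in> S" unfolding S_def p0_def using False Suc.prems by auto
      define d where "d = x (Suc m) - x m"
      have d: "d > 0" unfolding d_def using mono False Suc.prems by auto
      define a where "a = (1/d) *\<^sub>R (v (Suc m) - (\<Sum>p\<in>S. phi p (x (Suc m)) *\<^sub>R A p))"
      define A' where "A' = (\<lambda>q. A q + (if q = p0 then a else 0))"
      have val: "(\<Sum>p\<in>S. phi p z *\<^sub>R A' p) = (\<Sum>p\<in>S. phi p z *\<^sub>R A p) + phi p0 z *\<^sub>R a" for z
      proof -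
        have "(\<Sum>p\<in>S. phi p z *\<^sub>R A' p) = (\<Sum>p\<in>S. phi p z *\<^sub>R A p + (if p = p0 then phi p0 z *\<^sub>R a else 0))"
          by (rule sum.cong) (auto simp: A'_def scaleR_add_right)
        also have "\<dots> = (\<Sum>p\<in>S. phi p z *\<^sub>R A p) + phi p0 z *\<^sub>R a"
          using finS mem by (simp add: sum.distrib)
        finally show ?thesis .
      qed
      have "\<forall>i. 1 \<le> i \<and> i \<le> Suc m \<longrightarrow> (\<Sum>p\<in>S. phi p (x i) *\<^sub>R A' p) = v i"
      proof (intro allI impI)
        fix i assume i: "1 \<le> i \<and> i \<le> Suc m"
        show "(\<Sum>p\<in>S. phi p (x i) *\<^sub>R A' p) = v i"
        proof (cases "i = Suc m")
          case True
          have "phi p0 (x (Suc m)) = d" unfolding phi_def p0_def d_def using d d_def by simp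
          then show ?thesis unfolding val True a_def using d by simp
        next
          case False
          then have im: "i \<le> m" using i by simp
          have "x i \<le> x m" using x_mono[OF mono, of i m] im i Suc.prems by (cases "i = m") auto
          then have "phi p0 (x i) = 0" unfolding phi_def p0_def by simp
          then show ?thesis unfolding val using A im i by simp
        qed
      qed
      then show ?thesis by blast
    qed
  qed
  obtain A where "\<forall>i. 1 \<le> i \<and> i \<le> n \<longrightarrow> (\<Sum>p\<in>S. phi p (x i) *\<^sub>R A p) = v i"
    using ex[OF n order_refl] by blast
  then show ?thesis unfolding S_def by (intro exI[of _ A]) auto
qed



lemma R_gen:
  fixes x :: "nat \<Rightarrow> real"
  assumes n: "n \<ge> 2" and x1: "x 1 = -1" and xn: "x n = 1"
    and mono: "\<forall>i. 1 \<le> i \<and> i < n \<longrightarrow> x i < x (i + 1)"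
    and R: "R = {x 1, x n} \<union> {x i | i. 2 \<le> i \<and> i \<le> n - 1 \<and> Q i}"
  shows "finite R" "-1 \<in> R" "1 \<in> R" "R \<subseteq> x ` {1..n}" "{-1,1::real} \<times> R \<subseteq> Ucal"
proof -
  show sub: "R \<subseteq> x ` {1..n}"
  proof
    fix r assume "r \<in> R"
    then consider "r = x 1" | "r = x n" | i where "r = x i" "2 \<le> i" "i \<le> n - 1"
      unfolding R by blast
    then show "r \<in> x ` {1..n}"
    proof cases
      case 1 then show ?thesis using n by auto
    next
      case 2 then show ?thesis using n by auto
    next
      case 3 then show ?thesis by auto
    qed
  qed
  then show "finite R" by (rule finite_subset) simp
  show "-1 \<in> R" "1 \<in> R" unfolding R using x1 xn by auto
  have "R \<subseteq> {-1..1}"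
  proof
    fix r assume "r \<in> R"
    then obtain i where "i \<in> {1..n}" "r = x i" using sub by blast
    then show "r \<in> {-1..1}" using x_range[OF mono x1 xn, of i] by auto
  qed
  then show "{-1,1::real} \<times> R \<subseteq> Ucal" unfolding Ucal_def by auto
qed

lemma S_sub:
  fixes x :: "nat \<Rightarrow> real"
  assumes x1: "x 1 = -1" and xn: "x n = 1"
    and mono: "\<forall>i. 1 \<le> i \<and> i < n \<longrightarrow> x i < x (i + 1)"
  shows "{-1,1::real} \<times> x ` {1..n} \<subseteq> Ucal"
proof
  fix p assume "p \<in> {-1,1::real} \<times> x ` {1..n}"
  then obtain s i where "s \<in> {-1,1}" "i \<in> {1..n}" "p = (s, x i)" by blast
  then show "p \<in> Ucal" using x_range[OF mono x1 xn, of i] unfolding Ucal_def by auto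
qed

lemma reg_part:
  fixes n :: nat and x :: "nat \<Rightarrow> real" and yr :: "nat \<Rightarrow> real"
  assumes n: "n \<ge> 2" and x1: "x 1 = -1" and xn: "x n = 1"
    and mono: "\<forall>i. 1 \<le> i \<and> i < n \<longrightarrow> x i < x (i + 1)"
  shows "\<exists>\<rho> h. reg_feasible n x yr \<rho> h \<and> vm_support \<rho> h \<subseteq> F_reg n x yr \<and>
            (\<forall>\<rho>' h'. reg_feasible n x yr \<rho>' h' \<longrightarrow> vm_tv \<rho> h \<le> vm_tv \<rho>' h')"
proof -
  define R where "R = R_reg n x yr"
  define F where "F = {-1,1::real} \<times> R"
  have Rp: "finite R" "-1 \<in> R" "1 \<in> R" "R \<subseteq> x ` {1..n}" "F \<subseteq> Ucal"
    using R_gen[OF n x1 xn mono R_def[unfolded R_reg_def]] unfolding F_def by auto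
  have finF: "finite F" unfolding F_def using Rp by simp
  define P where "P = (\<lambda>A::real\<times>real\<Rightarrow>real. \<forall>i\<in>{1..n}. (\<Sum>p\<in>F. phi p (x i) *\<^sub>R A p) = yr i)"
  have red: "\<exists>A. P A \<and> (\<Sum>p\<in>F. norm (A p)) \<le> vm_tv \<rho> h" if feas: "reg_feasible n x yr \<rho> h" for \<rho> h
  proof -
    have vm: "vmeas \<rho> h" and fi: "\<forall>i\<in>{1..n}. vm_f \<rho> h (x i) = yr i"
      using feas unfolding reg_feasible_def by auto
    obtain A where A1: "(\<Sum>p\<in>F. norm (A p)) \<le> vm_tv \<rho> h"
      and A2: "\<forall>z\<in>R. (\<Sum>p\<in>F. phi p z *\<^sub>R A p) = vm_f \<rho> h z"
      using reduce[OF Rp(1-3) vm] unfolding F_def by blast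
    have "P A" unfolding P_def
    proof
      fix i assume i: "i \<in> {1..n}"
      show "(\<Sum>p\<in>F. phi p (x i) *\<^sub>R A p) = yr i"
      proof (cases "x i \<in> R")
        case True then show ?thesis using A2 fi i by auto
      next
        case False
        have R1: "x 1 \<in> R" "x n \<in> R" using Rp x1 xn by auto
        obtain ia ib where b: "1 \<le> ia" "ia < i" "i < ib" "ib \<le> n" "x ia \<in> R" "x ib \<in> R"
          "\<forall>j. ia < j \<and> j < ib \<longrightarrow> x j \<notin> R" "\<forall>r\<in>R. \<not>(x ia < r \<and> r < x ib)"
          using bracket[OF mono Rp(4) R1 _ _ False] i by auto
        have lt: "x ia < x i" "x i < x ib" using x_mono[OF mono] b by auto
        have "(\<Sum>p\<in>F. phi p (x i) *\<^sub>R A p) =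
           ((x ib - x i)/(x ib - x ia)) *\<^sub>R (\<Sum>p\<in>F. phi p (x ia) *\<^sub>R A p) +
           ((x i - x ia)/(x ib - x ia)) *\<^sub>R (\<Sum>p\<in>F. phi p (x ib) *\<^sub>R A p)"
          unfolding F_def by (rule val_interp) (use lt b in auto)
        also have "\<dots> = ((x ib - x i)/(x ib - x ia)) * yr ia + ((x i - x ia)/(x ib - x ia)) * yr ib"
          using A2 fi b by auto
        also have "\<dots> = yr i"
          by (rule reg_affine[OF mono b(1) _ b(4), symmetric]) (use b R_def in auto)
        finally show ?thesis .
      qed
    qed
    then show ?thesis using A1 by blast
  qed
  have exfeas: "\<exists>\<rho> h. reg_feasible n x yr \<rho> h"
  proof -
    define S where "S = {-1,1::real} \<times> x ` {1..n}"
    obtain A0 where A0: "\<forall>i\<in>{1..n}. (\<Sum>p\<in>S. phi p (x i) *\<^sub>R A0 p) = yr i"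
      using interp_exists[OF mono x1 xn, of yr] n unfolding S_def by auto
    have finS: "finite S" "S \<subseteq> Ucal" unfolding S_def using S_sub[OF x1 xn mono] by auto
    have "\<forall>i\<in>{1..n}. vm_f (dmeas S) (dh S A0) (x i) = yr i"
      using A0 by (simp only: dmeas_f[OF finS])
    then have "reg_feasible n x yr (dmeas S) (dh S A0)"
      unfolding reg_feasible_def using dmeas_vmeas[OF finS] by auto
    then show ?thesis by blast
  qed
  have exP: "\<exists>A. P A" using exfeas red by blast
  have cl: "P B" if Ak: "\<And>k. P (Ak k)" and lim: "\<forall>p\<in>F. (\<lambda>k. Ak k p) \<longlonglongrightarrow> B p" for Ak B
    unfolding P_def
  proof
    fix i assume i: "i \<in> {1..n}"
    have "(\<lambda>k. \<Sum>p\<in>F. phi p (x i) *\<^sub>R Ak k p) \<longlonglongrightarrow> (\<Sum>p\<in>F. phi p (x i) *\<^sub>R B p)"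
      using lim by (intro tendsto_sum tendsto_scaleR tendsto_const) auto
    moreover have "(\<lambda>k. \<Sum>p\<in>F. phi p (x i) *\<^sub>R Ak k p) = (\<lambda>k. yr i)"
      using Ak i unfolding P_def by auto
    ultimately show "(\<Sum>p\<in>F. phi p (x i) *\<^sub>R B p) = yr i"
      using LIMSEQ_unique tendsto_const by metis
  qed
  obtain B where PB: "P B" and Bmin: "\<forall>A. P A \<longrightarrow> (\<Sum>p\<in>F. norm (B p)) \<le> (\<Sum>p\<in>F. norm (A p))"
    using exists_min[OF finF exP] cl by blast
  have fin2: "finite F" "F \<subseteq> Ucal" using finF Rp by auto
  have "\<forall>i\<in>{1..n}. vm_f (dmeas F) (dh F B) (x i) = yr i"
    using PB unfolding P_def by (simp only: dmeas_f[OF fin2])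
  then have feasB: "reg_feasible n x yr (dmeas F) (dh F B)"
    unfolding reg_feasible_def using dmeas_vmeas[OF fin2] by auto
  have suppB: "vm_support (dmeas F) (dh F B) \<subseteq> F_reg n x yr"
    using dmeas_support[OF finF] unfolding F_def R_def F_reg_def .
  have optB: "vm_tv (dmeas F) (dh F B) \<le> vm_tv \<rho>' h'" if fe: "reg_feasible n x yr \<rho>' h'" for \<rho>' h'
  proof -
    obtain A where PA: "P A" and JA: "(\<Sum>p\<in>F. norm (A p)) \<le> vm_tv \<rho>' h'" using red[OF fe] by blast
    have "vm_tv (dmeas F) (dh F B) = (\<Sum>p\<in>F. norm (B p))" by (rule dmeas_tv[OF fin2])
    also have "\<dots> \<le> (\<Sum>p\<in>F. norm (A p))" using Bmin PA by blast
    also have "\<dots> \<le> vm_tv \<rho>' h'" by (rule JA)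
    finally show ?thesis .
  qed
  show ?thesis using feasB suppB optB by blast
qed

lemma class_part:
  fixes n :: nat and x :: "nat \<Rightarrow> real" and yc :: "nat \<Rightarrow> 'k::finite"
  assumes n: "n \<ge> 2" and x1: "x 1 = -1" and xn: "x n = 1"
    and mono: "\<forall>i. 1 \<le> i \<and> i < n \<longrightarrow> x i < x (i + 1)"
  shows "\<exists>\<rho> h. class_feasible n x yc \<rho> h \<and> vm_support \<rho> h \<subseteq> F_class n x yc \<and>
            (\<forall>\<rho>' h'. class_feasible n x yc \<rho>' h' \<longrightarrow> vm_tv \<rho> h \<le> vm_tv \<rho>' h')"
proof -
  define R where "R = R_class n x yc"
  define F where "F = {-1,1::real} \<times> R"
  have Rp: "finite R" "-1 \<in> R" "1 \<in> R" "R \<subseteq> x ` {1..n}" "F \<subseteq> Ucal"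
    using R_gen[OF n x1 xn mono R_def[unfolded R_class_def]] unfolding F_def by auto
  have finF: "finite F" unfolding F_def using Rp by simp
  define C where "C = (\<lambda>(y::'k) (v::real^'k). \<forall>l. (axis y 1 - axis l 1) \<bullet> v \<ge> (if y \<noteq> l then 1 else 0))"
  define P where "P = (\<lambda>A::real\<times>real\<Rightarrow>real^'k. \<forall>i\<in>{1..n}. C (yc i) (\<Sum>p\<in>F. phi p (x i) *\<^sub>R A p))"
  have Cconv: "C y (a *\<^sub>R v + b *\<^sub>R w)" if "C y v" "C y w" "a \<ge> 0" "b \<ge> 0" "a + b = 1" for y v w a b
    unfolding C_def
  proof
    fix l
    define c :: real where "c = (if y \<noteq> l then 1 else 0)"
    have "a * c + b * c \<le> a * ((axis y 1 - axis l 1) \<bullet> v) + b * ((axis y 1 - axis l 1) \<bullet> w)"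
      using that unfolding C_def c_def by (intro add_mono mult_left_mono) auto
    moreover have "a * c + b * c = c" using that by (simp add: distrib_right[symmetric])
    ultimately show "(axis y 1 - axis l 1) \<bullet> (a *\<^sub>R v + b *\<^sub>R w) \<ge> (if y \<noteq> l then 1 else 0)"
      unfolding c_def by (simp add: inner_add_right)
  qed
  have red: "\<exists>A. P A \<and> (\<Sum>p\<in>F. norm (A p)) \<le> vm_tv \<rho> h" if feas: "class_feasible n x yc \<rho> h" for \<rho> h
  proof -
    have vm: "vmeas \<rho> h" and fi: "\<forall>i\<in>{1..n}. C (yc i) (vm_f \<rho> h (x i))"
      using feas unfolding class_feasible_def C_def by auto
    obtain A where A1: "(\<Sum>p\<in>F. norm (A p)) \<le> vm_tv \<rho> h"
      and A2: "\<forall>z\<in>R. (\<Sum>p\<in>F. phi p z *\<^sub>R A p) = vm_f \<rho> h z"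
      using reduce[OF Rp(1-3) vm] unfolding F_def by blast
    have "P A" unfolding P_def
    proof
      fix i assume i: "i \<in> {1..n}"
      show "C (yc i) (\<Sum>p\<in>F. phi p (x i) *\<^sub>R A p)"
      proof (cases "x i \<in> R")
        case True then show ?thesis using A2 fi i by auto
      next
        case False
        have R1: "x 1 \<in> R" "x n \<in> R" using Rp x1 xn by auto
        obtain ia ib where b: "1 \<le> ia" "ia < i" "i < ib" "ib \<le> n" "x ia \<in> R" "x ib \<in> R"
          "\<forall>j. ia < j \<and> j < ib \<longrightarrow> x j \<notin> R" "\<forall>r\<in>R. \<not>(x ia < r \<and> r < x ib)"
          using bracket[OF mono Rp(4) R1 _ _ False] i by auto
        have lt: "x ia < x i" "x i < x ib" using x_mono[OF mono] b by auto
        have "(\<Sum>p\<in>F. phi p (x i) *\<^sub>R A p) =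
           ((x ib - x i)/(x ib - x ia)) *\<^sub>R (\<Sum>p\<in>F. phi p (x ia) *\<^sub>R A p) +
           ((x i - x ia)/(x ib - x ia)) *\<^sub>R (\<Sum>p\<in>F. phi p (x ib) *\<^sub>R A p)"
          unfolding F_def by (rule val_interp) (use lt b in auto)
        also have "\<dots> = ((x ib - x i)/(x ib - x ia)) *\<^sub>R vm_f \<rho> h (x ia) + ((x i - x ia)/(x ib - x ia)) *\<^sub>R vm_f \<rho> h (x ib)"
          using A2 b by auto
        finally have eq: "(\<Sum>p\<in>F. phi p (x i) *\<^sub>R A p) = \<dots>" .
        have yy: "yc i = yc ia \<and> yc ib = yc ia"
          by (rule class_const[OF b(1-4)]) (use b R_def in auto)
        have ia1: "ia \<in> {1..n}" "ib \<in> {1..n}" using b by auto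
        have Ca: "C (yc i) (vm_f \<rho> h (x ia))" "C (yc i) (vm_f \<rho> h (x ib))"
          using fi[rule_format, OF ia1(1)] fi[rule_format, OF ia1(2)] yy by simp_all
        have s1: "(x ib - x i)/(x ib - x ia) + (x i - x ia)/(x ib - x ia) = 1"
          using lt by (simp add: add_divide_distrib[symmetric])
        show ?thesis unfolding eq by (rule Cconv[OF Ca]) (use lt s1 in auto)
      qed
    qed
    then show ?thesis using A1 by blast
  qed
  have exfeas: "\<exists>\<rho> h. class_feasible n x yc \<rho> h"
  proof -
    define S where "S = {-1,1::real} \<times> x ` {1..n}"
    obtain A0 where A0: "\<forall>i\<in>{1..n}. (\<Sum>p\<in>S. phi p (x i) *\<^sub>R A0 p) = axis (yc i) (1::real)"
      using interp_exists[OF mono x1 xn, of "\<lambda>i. axis (yc i) (1::real)"] n unfolding S_def by auto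
    have finS: "finite S" "S \<subseteq> Ucal" unfolding S_def using S_sub[OF x1 xn mono] by auto
    have "\<forall>i\<in>{1..n}. vm_f (dmeas S) (dh S A0) (x i) = axis (yc i) 1"
      using A0 by (simp only: dmeas_f[OF finS])
    moreover have "C y (axis y 1)" for y unfolding C_def
      by (auto simp: inner_diff_left inner_axis_axis)
    ultimately have "class_feasible n x yc (dmeas S) (dh S A0)"
      unfolding class_feasible_def using dmeas_vmeas[OF finS] unfolding C_def by auto
    then show ?thesis by blast
  qed
  have exP: "\<exists>A. P A" using exfeas red by blast
  have cl: "P B" if Ak: "\<And>k. P (Ak k)" and lim: "\<forall>p\<in>F. (\<lambda>k. Ak k p) \<longlonglongrightarrow> B p" for Ak B
    unfolding P_def
  proof
    fix i assume i: "i \<in> {1..n}"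
    have t: "(\<lambda>k. \<Sum>p\<in>F. phi p (x i) *\<^sub>R Ak k p) \<longlonglongrightarrow> (\<Sum>p\<in>F. phi p (x i) *\<^sub>R B p)"
      using lim by (intro tendsto_sum tendsto_scaleR tendsto_const) auto
    show "C (yc i) (\<Sum>p\<in>F. phi p (x i) *\<^sub>R B p)" unfolding C_def
    proof
      fix l
      have "(\<lambda>k. (axis (yc i) 1 - axis l 1) \<bullet> (\<Sum>p\<in>F. phi p (x i) *\<^sub>R Ak k p))
          \<longlonglongrightarrow> (axis (yc i) 1 - axis l 1) \<bullet> (\<Sum>p\<in>F. phi p (x i) *\<^sub>R B p)"
        by (intro tendsto_inner tendsto_const t)
      moreover have "\<forall>k. (if yc i \<noteq> l then 1 else 0) \<le> (axis (yc i) 1 - axis l 1) \<bullet> (\<Sum>p\<in>F. phi p (x i) *\<^sub>R Ak k p)"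
        using Ak i unfolding P_def C_def by auto
      ultimately show "(if yc i \<noteq> l then 1 else 0) \<le> (axis (yc i) 1 - axis l 1) \<bullet> (\<Sum>p\<in>F. phi p (x i) *\<^sub>R B p)"
        by (intro LIMSEQ_le_const) auto
    qed
  qed
  obtain B where PB: "P B" and Bmin: "\<forall>A. P A \<longrightarrow> (\<Sum>p\<in>F. norm (B p)) \<le> (\<Sum>p\<in>F. norm (A p))"
    using exists_min[OF finF exP] cl by blast
  have fin2: "finite F" "F \<subseteq> Ucal" using finF Rp by auto
  have "\<forall>i\<in>{1..n}. C (yc i) (vm_f (dmeas F) (dh F B) (x i))"
    using PB unfolding P_def by (simp only: dmeas_f[OF fin2])
  then have feasB: "class_feasible n x yc (dmeas F) (dh F B)"
    unfolding class_feasible_def using dmeas_vmeas[OF fin2] unfolding C_def by auto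
  have suppB: "vm_support (dmeas F) (dh F B) \<subseteq> F_class n x yc"
    using dmeas_support[OF finF] unfolding F_def R_def F_class_def .
  have optB: "vm_tv (dmeas F) (dh F B) \<le> vm_tv \<rho>' h'" if fe: "class_feasible n x yc \<rho>' h'" for \<rho>' h'
  proof -
    obtain A where PA: "P A" and JA: "(\<Sum>p\<in>F. norm (A p)) \<le> vm_tv \<rho>' h'" using red[OF fe] by blast
    have "vm_tv (dmeas F) (dh F B) = (\<Sum>p\<in>F. norm (B p))" by (rule dmeas_tv[OF fin2])
    also have "\<dots> \<le> (\<Sum>p\<in>F. norm (A p))" using Bmin PA by blast
    also have "\<dots> \<le> vm_tv \<rho>' h'" by (rule JA)
    finally show ?thesis .
  qed
  show ?thesis using feasB suppB optB by blast
qed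

theorem theorem1:
  fixes n :: nat and x :: "nat \<Rightarrow> real"
    and yr :: "nat \<Rightarrow> real" and yc :: "nat \<Rightarrow> 'k::finite"
  assumes "n \<ge> 2"
    and "x 1 = -1" and "x n = 1"
    and "\<forall>i. 1 \<le> i \<and> i < n \<longrightarrow> x i < x (i + 1)"
  shows "(\<exists>\<rho> h. reg_feasible n x yr \<rho> h \<and> vm_support \<rho> h \<subseteq> F_reg n x yr \<and>
            (\<forall>\<rho>' h'. reg_feasible n x yr \<rho>' h' \<longrightarrow> vm_tv \<rho> h \<le> vm_tv \<rho>' h'))
       \<and> (\<exists>\<rho> h. class_feasible n x yc \<rho> h \<and> vm_support \<rho> h \<subseteq> F_class n x yc \<and>
            (\<forall>\<rho>' h'. class_feasible n x yc \<rho>' h' \<longrightarrow> vm_tv \<rho> h \<le> vm_tv \<rho>' h'))"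
  using reg_part[OF assms] class_part[OF assms] by blast


end
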